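(* $\mathrm{Ndim}(\mathcal F_{\mathrm{aCORE}})\le4m+(8k+4)\log m+4\log(8e)=O(m+k\log m)$.
   Context: $\mathcal A=[m]$, $1\le k\le m$, $\mathcal A_k$ the set of $k$-subsets of $\mathcal A$, $\mathcal E=2^{\mathcal A}$. A profile is $P=(A_1,\dots,A_n)\in\mathcal E^n$, $n\ge1$. For $\alpha,\beta\ge0$, $\mathrm{CORE}_{(\alpha,\beta)}$ maps $P$ to the set of $W\in\mathcal A_k$ such that for every nonempty $W'\subseteq\mathcal A$, $|\{j\in[n]:|A_j\cap W'|>\alpha|A_j\cap W|\}|<\beta\frac{|W'|}{k}n$. $\mathcal F_{\mathrm{aCORE}}=\{\mathrm{CORE}_{(\alpha,\beta)}:\alpha,\beta\ge0\}$. Natarajan dimension: a finite set $\mathcal P$ of profiles is shattered by $\mathcal F$ if there are $f^0,f^1$ with $f^0(P)\ne f^1(P)$ on $\mathcal P$ such that for every $B\subseteq\mathcal P$ some $f\in\mathcal F$ equals $f^0$ on $B$ and $f^1$ on $\mathcal P\setminus B$; $\mathrm{Ndim}$ is the largest size of a shattered set. Logarithms are base 2. *)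

theory Defs
  imports Complex_Main
begin

type_synonym profile = "nat set list"

text \<open>Alternatives are [m] = {1..m}. A profile is a nonempty list of approval sets
  A_j \<subseteq> [m]; voter j corresponds to list index j < length P.\<close>
definition valid_profile :: "nat \<Rightarrow> profile \<Rightarrow> bool" where
  "valid_profile m P \<longleftrightarrow> length P \<ge> 1 \<and> (\<forall>A\<in>set P. A \<subseteq> {1..m})"

definition core_ab :: "nat \<Rightarrow> nat \<Rightarrow> real \<Rightarrow> real \<Rightarrow> profile \<Rightarrow> nat set set" where
  "core_ab m k \<alpha> \<beta> P =
     {W. W \<subseteq> {1..m} \<and> card W = k \<and>
        (\<forall>W'. W' \<subseteq> {1..m} \<and> W' \<noteq> {} \<longrightarrow>
           real (card {j. j < length P \<and> real (card (P ! j \<inter> W')) > \<alpha> * real (card (P ! j \<inter> W))})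
             < \<beta> * real (card W') / real k * real (length P))}"

definition F_aCORE :: "nat \<Rightarrow> nat \<Rightarrow> (profile \<Rightarrow> nat set set) set" where
  "F_aCORE m k = {core_ab m k \<alpha> \<beta> | \<alpha> \<beta>. \<alpha> \<ge> 0 \<and> \<beta> \<ge> 0}"

definition N_shatters :: "nat \<Rightarrow> (profile \<Rightarrow> 'b) set \<Rightarrow> profile set \<Rightarrow> bool" where
  "N_shatters m F Ps \<longleftrightarrow> finite Ps \<and> (\<forall>P\<in>Ps. valid_profile m P) \<and>
     (\<exists>f0 f1. (\<forall>P\<in>Ps. f0 P \<noteq> f1 P) \<and>
        (\<forall>B\<subseteq>Ps. \<exists>f\<in>F. (\<forall>P\<in>B. f P = f0 P) \<and> (\<forall>P\<in>Ps - B. f P = f1 P)))"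

end

theory Submission
  imports Defs
begin

lemma numeric:
  fixes d m :: nat
  assumes "2^d \<le> ((m+1)^2+1) * (d*2^m+1)"
  shows "d \<le> 4*m+12"
proof (rule ccontr)
  assume nt: "\<not> d \<le> 4*m+12"
  define e where "e = d - 2*m - 2"
  have e: "d = e + 2*m + 2" "e \<ge> 2*m+11" using nt unfolding e_def by linarith+
  have A: "(m+1)^2+1 \<le> (2::nat)^(m+2)"
  proof (induction m)
    case 0 then show ?case by simp
  next
    case (Suc m)
    show ?case
    proof (cases "m = 0")
      case True then show ?thesis by (simp add: power2_eq_square)
    next
      case False
      then have "1 \<le> m*m" by (simp add: Suc_leI)
      have g1: "(Suc m + 1)^2 + 1 = m*m+4*m+5" by (simp add: power2_eq_square)
      have g2: "(2::nat)^(Suc m+2) = 2*2^(m+2)" by simp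
      have g3: "m*m+2*m+2 \<le> (2::nat)^(m+2)" using Suc.IH by (simp add: power2_eq_square)
      show ?thesis unfolding g1 g2 using g3 \<open>1 \<le> m*m\<close> by linarith
    qed
  qed
  have B: "2*x < (2::nat)^x" if "x \<ge> 3" for x using that
  proof (induction x rule: dec_induct)
    case base then show ?case by simp
  next
    case (step n) then show ?case by simp
  qed
  have "d + 1 < 2^e" using B[of e] e by linarith
  have "(2::nat)^d \<le> 2^(m+2) * (d*2^m+1)" using assms A by (meson le_trans mult_le_mono1)
  also have "\<dots> \<le> 2^(m+2) * ((d+1)*2^m)" by (rule mult_le_mono2) (simp add: algebra_simps)
  also have "\<dots> = (d+1) * 2^(2*m+2)" by (simp add: power_add algebra_simps power_mult power2_eq_square)
  also have "\<dots> < 2^e * 2^(2*m+2)" using \<open>d+1 < 2^e\<close> by (intro mult_strict_right_mono) auto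
  also have "\<dots> = 2^d" using e by (simp add: power_add)
  finally show False by simp
qed

lemma chain_card:
  assumes "finite S" "\<forall>A\<in>C. A \<subseteq> S" "\<forall>A\<in>C. \<forall>B\<in>C. A \<subseteq> B \<or> B \<subseteq> A"
  shows "card C \<le> card S + 1"
proof -
  have fin: "finite A" if "A \<in> C" for A using assms(1) assms(2) that by (meson finite_subset)
  have "inj_on card C"
  proof (rule inj_onI)
    fix A B assume AB: "A \<in> C" "B \<in> C" and c: "card A = card B"
    have "A \<subseteq> B \<or> B \<subseteq> A" using assms(3) AB by simp
    then show "A = B"
    proof
      assume "A \<subseteq> B" then show "A = B" using c fin[OF AB(2)] card_subset_eq by metis
    next
      assume "B \<subseteq> A" then show "A = B" using c fin[OF AB(1)] card_subset_eq by metis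
    qed
  qed
  moreover have "card ` C \<subseteq> {0..card S}"
  proof
    fix x assume "x \<in> card ` C"
    then obtain A where "A \<in> C" "x = card A" by blast
    then have "x \<le> card S" using assms(1,2) card_mono by metis
    then show "x \<in> {0..card S}" by simp
  qed
  ultimately have "card C \<le> card {0..card S}" using card_inj_on_le by blast
  then show ?thesis by simp
qed

definition Tset :: "nat \<Rightarrow> real \<Rightarrow> (nat \<times> nat) set" where
  "Tset m \<alpha> = {(a,b). a \<le> m \<and> b \<le> m \<and> \<alpha> * real b < real a}"

lemma core_T:
  assumes "Tset m \<alpha> = Tset m \<alpha>'"
  shows "core_ab m k \<alpha> \<beta> P = core_ab m k \<alpha>' \<beta> P"
proof -
  have key: "\<alpha> * real b < real a \<longleftrightarrow> \<alpha>' * real b < real a" if "a \<le> m" "b \<le> m" for a b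
  proof -
    have "(a,b) \<in> Tset m \<alpha> \<longleftrightarrow> (a,b) \<in> Tset m \<alpha>'" using assms by simp
    then show ?thesis using that by (simp add: Tset_def)
  qed
  have cm: "card (X \<inter> W) \<le> m" if "W \<subseteq> {1..m}" for X W
  proof -
    have "card (X \<inter> W) \<le> card W" using that by (intro card_mono) (auto intro: finite_subset)
    also have "\<dots> \<le> card {1..m}" using that by (intro card_mono) auto
    finally show ?thesis by simp
  qed
  have eqs: "{j. j < length P \<and> real (card (P ! j \<inter> W')) > \<alpha> * real (card (P ! j \<inter> W))}
      = {j. j < length P \<and> real (card (P ! j \<inter> W')) > \<alpha>' * real (card (P ! j \<inter> W))}"
    if "W \<subseteq> {1..m}" "W' \<subseteq> {1..m}" for W W'
    using key[OF cm[OF that(2)] cm[OF that(1)]] by blast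
  show ?thesis unfolding core_ab_def
  proof (intro Collect_cong conj_cong refl)
    fix W assume "W \<subseteq> {1..m}"
    then show "(\<forall>W'. W' \<subseteq> {1..m} \<and> W' \<noteq> {} \<longrightarrow>
           real (card {j. j < length P \<and> real (card (P ! j \<inter> W')) > \<alpha> * real (card (P ! j \<inter> W))})
             < \<beta> * real (card W') / real k * real (length P)) =
      (\<forall>W'. W' \<subseteq> {1..m} \<and> W' \<noteq> {} \<longrightarrow>
           real (card {j. j < length P \<and> real (card (P ! j \<inter> W')) > \<alpha>' * real (card (P ! j \<inter> W))})
             < \<beta> * real (card W') / real k * real (length P))"
      using eqs by simp
  qed
qed

lemma core_mono_beta:
  assumes "\<beta> \<le> \<beta>'"
  shows "core_ab m k \<alpha> \<beta> P \<subseteq> core_ab m k \<alpha> \<beta>' P"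
proof
  have le: "\<beta> * real c / real k * real n \<le> \<beta>' * real c / real k * real n" for c n
    using assms by (intro mult_right_mono divide_right_mono) auto
  fix W assume "W \<in> core_ab m k \<alpha> \<beta> P"
  then have W: "W \<subseteq> {1..m}" "card W = k"
    and h: "\<forall>W'. W' \<subseteq> {1..m} \<and> W' \<noteq> {} \<longrightarrow>
           real (card {j. j < length P \<and> real (card (P ! j \<inter> W')) > \<alpha> * real (card (P ! j \<inter> W))})
             < \<beta> * real (card W') / real k * real (length P)"
    unfolding core_ab_def by blast+
  have "\<forall>W'. W' \<subseteq> {1..m} \<and> W' \<noteq> {} \<longrightarrow>
           real (card {j. j < length P \<and> real (card (P ! j \<inter> W')) > \<alpha> * real (card (P ! j \<inter> W))})
             < \<beta>' * real (card W') / real k * real (length P)"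
  proof (intro allI impI)
    fix W' assume w: "W' \<subseteq> {1..m} \<and> W' \<noteq> {}"
    show "real (card {j. j < length P \<and> real (card (P ! j \<inter> W')) > \<alpha> * real (card (P ! j \<inter> W))})
             < \<beta>' * real (card W') / real k * real (length P)"
      using h[rule_format, OF w] le[of "card W'" "length P"] by linarith
  qed
  then show "W \<in> core_ab m k \<alpha> \<beta>' P" unfolding core_ab_def using W by blast
qed

lemma T_anti:
  assumes "0 \<le> \<alpha>" "\<alpha> \<le> \<alpha>'"
  shows "Tset m \<alpha>' \<subseteq> Tset m \<alpha>"
proof -
  have "\<alpha> * real b \<le> \<alpha>' * real b" for b using assms by (intro mult_right_mono) auto
  then show ?thesis unfolding Tset_def by (auto intro: le_less_trans)
qed

lemma core_sub: "W \<in> core_ab m k a b P \<Longrightarrow> W \<subseteq> {1..m}"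
  unfolding core_ab_def mem_Collect_eq by (rule conjunct1)

lemma Y_mono:
  assumes "b \<le> b'" "Tset m a = Tset m a'"
  shows "{(P,W). P \<in> Ps \<and> W \<in> core_ab m k a b P} \<subseteq> {(P,W). P \<in> Ps \<and> W \<in> core_ab m k a' b' P}"
proof -
  have sub: "core_ab m k a b P \<subseteq> core_ab m k a' b' P" for P
  proof -
    have e: "core_ab m k a b' P = core_ab m k a' b' P" by (rule core_T[OF assms(2)])
    have "core_ab m k a b P \<subseteq> core_ab m k a b' P" by (rule core_mono_beta[OF assms(1)])
    then show ?thesis unfolding e .
  qed
  show ?thesis
  proof (rule subsetI)
    fix x assume "x \<in> {(P,W). P \<in> Ps \<and> W \<in> core_ab m k a b P}"
    then obtain P W where x: "x = (P,W)" and h: "P \<in> Ps" "W \<in> core_ab m k a b P" by (cases x) simp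
    have "W \<in> core_ab m k a' b' P" using sub[of P] h(2) by (rule subsetD)
    then show "x \<in> {(P,W). P \<in> Ps \<and> W \<in> core_ab m k a' b' P}" using x h(1) by simp
  qed
qed

theorem theorem12:
  fixes m k :: nat and Ps :: "profile set"
  assumes "1 \<le> k" and "k \<le> m"
    and "N_shatters m (F_aCORE m k) Ps"
  shows "real (card Ps) \<le> 4 * real m + (8 * real k + 4) * log 2 (real m) + 4 * log 2 (8 * exp 1)"
proof -
  from assms(3) obtain f0 f1 where finPs: "finite Ps" and neq: "\<forall>P\<in>Ps. f0 P \<noteq> f1 P"
    and sh: "\<forall>B\<subseteq>Ps. \<exists>f\<in>F_aCORE m k. (\<forall>P\<in>B. f P = f0 P) \<and> (\<forall>P\<in>Ps - B. f P = f1 P)"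
    unfolding N_shatters_def apply (elim conjE exE) apply (rule that) apply assumption+ done
  have "\<forall>B\<in>Pow Ps. \<exists>ab. fst ab \<ge> 0 \<and> snd ab \<ge> 0 \<and>
      (\<forall>P\<in>B. core_ab m k (fst ab) (snd ab) P = f0 P) \<and> (\<forall>P\<in>Ps - B. core_ab m k (fst ab) (snd ab) P = f1 P)"
  proof
    fix B assume "B \<in> Pow Ps"
    then have "B \<subseteq> Ps" by simp
    from sh[rule_format, OF this] have "\<exists>f\<in>F_aCORE m k. (\<forall>P\<in>B. f P = f0 P) \<and> (\<forall>P\<in>Ps - B. f P = f1 P)" .
    then obtain f where f1: "f \<in> F_aCORE m k" and f2: "(\<forall>P\<in>B. f P = f0 P) \<and> (\<forall>P\<in>Ps - B. f P = f1 P)"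
      by (rule bexE)
    from f1 have "\<exists>a b. f = core_ab m k a b \<and> a \<ge> 0 \<and> b \<ge> 0" unfolding F_aCORE_def by (rule CollectD)
    then obtain a b where ab: "f = core_ab m k a b \<and> a \<ge> 0 \<and> b \<ge> 0" by (elim exE)
    show "\<exists>ab. fst ab \<ge> 0 \<and> snd ab \<ge> 0 \<and>
      (\<forall>P\<in>B. core_ab m k (fst ab) (snd ab) P = f0 P) \<and> (\<forall>P\<in>Ps - B. core_ab m k (fst ab) (snd ab) P = f1 P)"
    proof (rule exI[of _ "(a,b)"], unfold fst_conv snd_conv)
      have fe: "f = core_ab m k a b" by (rule conjunct1[OF ab])
      have "a \<ge> 0" by (rule conjunct1[OF conjunct2[OF ab]])
      have "b \<ge> 0" by (rule conjunct2[OF conjunct2[OF ab]])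
      have c1: "\<forall>P\<in>B. core_ab m k a b P = f0 P" using conjunct1[OF f2] unfolding fe .
      have c2: "\<forall>P\<in>Ps - B. core_ab m k a b P = f1 P" using conjunct2[OF f2] unfolding fe .
      show "0 \<le> a \<and> 0 \<le> b \<and> (\<forall>P\<in>B. core_ab m k a b P = f0 P) \<and> (\<forall>P\<in>Ps - B. core_ab m k a b P = f1 P)"
        by (intro conjI \<open>a \<ge> 0\<close> \<open>b \<ge> 0\<close> c1 c2)
    qed
  qed
  from bchoice[OF this] obtain g where g0: "\<forall>B\<in>Pow Ps. fst (g B) \<ge> 0 \<and> snd (g B) \<ge> 0 \<and>
      (\<forall>P\<in>B. core_ab m k (fst (g B)) (snd (g B)) P = f0 P) \<and> (\<forall>P\<in>Ps - B. core_ab m k (fst (g B)) (snd (g B)) P = f1 P)"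
    apply (elim exE) apply (rule that) apply assumption done
  have g: "\<And>B. B \<in> Pow Ps \<Longrightarrow> fst (g B) \<ge> 0 \<and> snd (g B) \<ge> 0 \<and>
      (\<forall>P\<in>B. core_ab m k (fst (g B)) (snd (g B)) P = f0 P) \<and> (\<forall>P\<in>Ps - B. core_ab m k (fst (g B)) (snd (g B)) P = f1 P)"
    by (rule bspec[OF g0])
  define Y where "Y a b = {(P,W). P \<in> Ps \<and> W \<in> core_ab m k a b P}" for a b
  define Ys where "Ys = {Y a b | a b. 0 \<le> a \<and> 0 \<le> b}"
  define Ts where "Ts = {Tset m a | a. 0 \<le> a}"
  define Yt where "Yt t = {Y a b | a b. 0 \<le> a \<and> 0 \<le> b \<and> Tset m a = t}" for t
  define S where "S = Ps \<times> Pow {1..m}"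
  have finS: "finite S" unfolding S_def using finPs by simp
  have YS: "Y a b \<subseteq> S" for a b
  proof
    fix x assume "x \<in> Y a b"
    then obtain P W where "x = (P,W)" "P \<in> Ps" "W \<in> core_ab m k a b P" unfolding Y_def by auto
    then show "x \<in> S" unfolding S_def using core_sub[of W m k a b P] by simp
  qed
  have coreY: "core_ab m k a b P = {W. (P,W) \<in> Y a b}" if "P \<in> Ps" for a b P
    unfolding Y_def using that by auto
  have inj: "inj_on (\<lambda>B. Y (fst (g B)) (snd (g B))) (Pow Ps)"
  proof (rule inj_onI, rule ccontr)
    fix B B' assume B: "B \<in> Pow Ps" "B' \<in> Pow Ps" and eq: "Y (fst (g B)) (snd (g B)) = Y (fst (g B')) (snd (g B'))"
      and ne: "B \<noteq> B'"
    have "\<exists>P. \<not> (P \<in> B \<longleftrightarrow> P \<in> B')" using ne by (simp add: set_eq_iff)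
    then obtain P where P0: "\<not> (P \<in> B \<longleftrightarrow> P \<in> B')" by (elim exE)
    have P: "P \<in> Ps" "(P \<in> B \<and> P \<notin> B') \<or> (P \<in> B' \<and> P \<notin> B)" using P0 B by auto
    have "core_ab m k (fst (g B)) (snd (g B)) P = core_ab m k (fst (g B')) (snd (g B')) P"
      using coreY[OF P(1)] eq by simp
    moreover have "core_ab m k (fst (g B)) (snd (g B)) P = (if P \<in> B then f0 P else f1 P)"
      using g[OF B(1)] P(1) by (cases "P \<in> B") simp_all
    moreover have "core_ab m k (fst (g B')) (snd (g B')) P = (if P \<in> B' then f0 P else f1 P)"
      using g[OF B(2)] P(1) by (cases "P \<in> B'") simp_all
    ultimately have "(if P \<in> B then f0 P else f1 P) = (if P \<in> B' then f0 P else f1 P)" by simp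
    then have "f0 P = f1 P" using P(2) by (cases "P \<in> B") simp_all
    then show False using P(1) neq by simp
  qed
  moreover have "(\<lambda>B. Y (fst (g B)) (snd (g B))) ` Pow Ps \<subseteq> Ys"
  proof (rule image_subsetI)
    fix B assume "B \<in> Pow Ps"
    then have gg: "0 \<le> fst (g B)" "0 \<le> snd (g B)" using g by simp_all
    show "Y (fst (g B)) (snd (g B)) \<in> Ys" unfolding Ys_def mem_Collect_eq
      apply (rule exI[of _ "fst (g B)"]) apply (rule exI[of _ "snd (g B)"]) using gg by simp
  qed
  moreover have finYs: "finite Ys" using YS finS unfolding Ys_def
    by (rule_tac finite_subset[of _ "Pow S"]) auto
  ultimately have c1: "card (Pow Ps) \<le> card Ys" by (rule card_inj_on_le)
  have finTs: "finite Ts" unfolding Ts_def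
    by (rule finite_subset[of _ "Pow ({0..m} \<times> {0..m})"]) (auto simp: Tset_def)
  have cTs: "card Ts \<le> (m+1)^2 + 1"
  proof -
    have "card Ts \<le> card ({0..m} \<times> {0..m}) + 1"
    proof (rule chain_card)
      show "\<forall>A\<in>Ts. A \<subseteq> {0..m} \<times> {0..m}" unfolding Ts_def Tset_def by auto
      show "\<forall>A\<in>Ts. \<forall>B\<in>Ts. A \<subseteq> B \<or> B \<subseteq> A"
      proof (intro ballI)
        fix A B assume "A \<in> Ts" "B \<in> Ts"
        from \<open>A \<in> Ts\<close> obtain a where aa: "A = Tset m a" "0 \<le> a" unfolding Ts_def apply (elim CollectE exE conjE) apply (rule that) apply assumption+ done
        from \<open>B \<in> Ts\<close> obtain a' where bb: "B = Tset m a'" "0 \<le> a'" unfolding Ts_def apply (elim CollectE exE conjE) apply (rule that) apply assumption+ done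
        show "A \<subseteq> B \<or> B \<subseteq> A" unfolding aa(1) bb(1) using T_anti[of a a' m] T_anti[of a' a m] aa(2) bb(2) by (cases "a \<le> a'") auto
      qed
    qed simp
    then show ?thesis by (simp add: power2_eq_square)
  qed
  have cYt: "card (Yt t) \<le> card Ps * 2^m + 1" for t
  proof -
    have "card (Yt t) \<le> card S + 1"
    proof (rule chain_card[OF finS])
      show "\<forall>A\<in>Yt t. A \<subseteq> S" unfolding Yt_def using YS by auto
      show "\<forall>A\<in>Yt t. \<forall>B\<in>Yt t. A \<subseteq> B \<or> B \<subseteq> A"
      proof (intro ballI)
        fix A B assume "A \<in> Yt t" "B \<in> Yt t"
        from \<open>A \<in> Yt t\<close> obtain a b where A: "A = Y a b" "Tset m a = t"
          unfolding Yt_def apply (elim CollectE exE conjE) apply (rule that) apply assumption+ done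
        from \<open>B \<in> Yt t\<close> obtain a' b' where B: "B = Y a' b'" "Tset m a' = t"
          unfolding Yt_def apply (elim CollectE exE conjE) apply (rule that) apply assumption+ done
        have tt: "Tset m a = Tset m a'" "Tset m a' = Tset m a" using A(2) B(2) by simp_all
        show "A \<subseteq> B \<or> B \<subseteq> A"
        proof (cases "b \<le> b'")
          case True
          then show ?thesis unfolding A B Y_def by (intro disjI1 Y_mono[OF True tt(1)])
        next
          case False
          then have "b' \<le> b" by simp
          then show ?thesis unfolding A B Y_def by (intro disjI2 Y_mono[OF \<open>b' \<le> b\<close> tt(2)])
        qed
      qed
    qed
    then show ?thesis unfolding S_def using finPs by (simp add: card_cartesian_product card_Pow)
  qed
  have "Ys = (\<Union>t\<in>Ts. Yt t)"
  proof (intro equalityI subsetI)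
    fix X assume "X \<in> Ys"
    then obtain a b where ab: "X = Y a b" "0 \<le> a" "0 \<le> b" unfolding Ys_def apply (elim CollectE exE conjE) apply (rule that) apply assumption+ done
    have "X \<in> Yt (Tset m a)" unfolding Yt_def mem_Collect_eq
      apply (rule exI[of _ a]) apply (rule exI[of _ b]) using ab by simp
    moreover have "Tset m a \<in> Ts" unfolding Ts_def mem_Collect_eq
      apply (rule exI[of _ a]) using ab by simp
    ultimately
    show "X \<in> (\<Union>t\<in>Ts. Yt t)" by (rule UN_I[rotated]) 
  next
    fix X assume "X \<in> (\<Union>t\<in>Ts. Yt t)"
    then obtain t where "X \<in> Yt t" by (elim UN_E)
    then obtain a b where ab: "X = Y a b" "0 \<le> a" "0 \<le> b" unfolding Yt_def apply (elim CollectE exE conjE) apply (rule that) apply assumption+ done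
    show "X \<in> Ys" unfolding Ys_def mem_Collect_eq
      apply (rule exI[of _ a]) apply (rule exI[of _ b]) using ab by simp
  qed
  then have "card Ys \<le> (\<Sum>t\<in>Ts. card (Yt t))" by (simp add: card_UN_le finTs)
  also have "\<dots> \<le> card Ts * (card Ps * 2^m + 1)" using sum_bounded_above[of Ts "\<lambda>t. card (Yt t)" "card Ps * 2^m + 1", OF cYt] by simp
  also have "\<dots> \<le> ((m+1)^2 + 1) * (card Ps * 2^m + 1)" using cTs by (rule mult_le_mono1)
  finally have "2 ^ card Ps \<le> ((m+1)^2 + 1) * (card Ps * 2^m + 1)" using c1 finPs by (simp add: card_Pow)
  then have d: "card Ps \<le> 4*m+12" by (rule numeric)
  have l1: "0 \<le> log 2 (real m)" using assms by simp
  have l2: "3 \<le> log 2 (8 * exp 1)"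
  proof -
    have "log 2 8 \<le> log 2 (8 * exp 1)" by (subst log_le_cancel_iff) auto
    moreover have "log 2 (8::real) = 3"
    proof -
      have "log 2 (8::real) = log 2 ((2::real)^3)" by simp
      also have "\<dots> = 3" by (subst log_nat_power) simp_all
      finally show ?thesis .
    qed
    ultimately show ?thesis by simp
  qed
  have l3: "0 \<le> (8 * real k + 4) * log 2 (real m)" using l1 by (intro mult_nonneg_nonneg) simp_all
  have "real (card Ps) \<le> real (4*m+12)" using d by (rule of_nat_mono)
  then have dr: "real (card Ps) \<le> 4 * real m + 12" by simp
  show ?thesis using dr l2 l3 by linarith
qed

end
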